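(* For every $v\in\big[-B^{1/(1+\epsilon)},\,B^{1/(1+\epsilon)}(1-\pi)^{-1/(1+\epsilon)}\big)$, the set $\hat S(v)$ is compact.
   Context: $\pi\in(0,1)$, $\epsilon>0$, $B>0$. For $\lambda\in\mathbb{R}^3$ and $X\in\mathbb{R}$: $g^U(X,\lambda,v)=1+\lambda_1v-\lambda_2(1-\pi)+\lambda_3(|X|^{1+\epsilon}-B)-\big(\frac{\lambda_1X}{1-\pi}-\lambda_2\big)_+$. $\hat S(v)=\{\lambda\in\mathbb{R}^3:\lambda_1\ge0,\lambda_2\in\mathbb{R},\lambda_3\ge0,\ g^U(x,\lambda,v)\ge0\ \forall x\in\mathbb{R}\}$. *)

theory Defs
  imports "HOL-Analysis.Analysis"
begin

definition pos_part :: "real \<Rightarrow> real" where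
  "pos_part t = max t 0"

definition gU :: "real \<Rightarrow> real \<Rightarrow> real \<Rightarrow> real \<Rightarrow> real ^ 3 \<Rightarrow> real \<Rightarrow> real" where
  "gU p eps B X lam v =
     1 + lam $ 1 * v - lam $ 2 * (1 - p) + lam $ 3 * (\<bar>X\<bar> powr (1 + eps) - B)
       - pos_part (lam $ 1 * X / (1 - p) - lam $ 2)"

definition S_hat :: "real \<Rightarrow> real \<Rightarrow> real \<Rightarrow> real \<Rightarrow> (real ^ 3) set" where
  "S_hat p eps B v = {lam. lam $ 1 \<ge> 0 \<and> lam $ 3 \<ge> 0 \<and> (\<forall>x::real. gU p eps B x lam v \<ge> 0)}"

end

theory Submission
  imports Defs
begin

lemma cl: "closed (S_hat p eps B v)"
proof -
  have "S_hat p eps B v = {lam. lam $ 1 \<ge> 0 \<and> lam $ 3 \<ge> 0 \<and> (\<forall>x::real. gU p eps B x lam v \<ge> 0)}"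
    by (simp add: S_hat_def)
  moreover have "closed {lam::real^3. lam $ 1 \<ge> 0 \<and> lam $ 3 \<ge> 0 \<and> (\<forall>x::real. gU p eps B x lam v \<ge> 0)}"
    unfolding gU_def pos_part_def divide_inverse
    by (intro closed_Collect_conj closed_Collect_all closed_Collect_le continuous_intros)
  ultimately show ?thesis by simp
qed

lemma bd:
  fixes p eps B v y :: real
  assumes "0 < p" "p < 1" "B > 0" "v < y" "(1-p) * (\<bar>y\<bar> powr (1 + eps)) < B"
  shows "bounded (S_hat p eps B v)"
proof -
  define q where "q = 1 - p"
  have q: "0 < q" "q < 1" "p + q = 1" using assms by (auto simp: q_def)
  define Y where "Y = \<bar>y\<bar> powr (1 + eps)"
  have Y: "q * Y < B" using assms by (simp add: Y_def q_def)
  define R where "R = 1/(y-v) + (1 + \<bar>v\<bar>/(y-v))/q + 1/p + 1/(B - q*Y)"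
  have "S_hat p eps B v \<subseteq> cball 0 R"
  proof
    fix lam :: "real^3" assume "lam \<in> S_hat p eps B v"
    then have a0: "lam $ 1 \<ge> 0" and c0: "lam $ 3 \<ge> 0" and g: "\<And>x. gU p eps B x lam v \<ge> 0"
      by (auto simp: S_hat_def)
    define a where "a = lam $ 1"
    define b where "b = lam $ 2"
    define c where "c = lam $ 3"
    have gy: "1 + a * v - b*q + c*(Y - B) - pos_part (a*y/q - b) \<ge> 0"
      using g[of y] by (simp add: gU_def a_def b_def c_def q_def Y_def)
    have g0: "1 + a * v - b*q + c*(0 - B) - pos_part (a*0/q - b) \<ge> 0"
      using g[of 0] by (simp add: gU_def a_def b_def c_def q_def)
    have pq: "p = 1 - q" using q by simp
    have pp: "pos_part t \<ge> t" "pos_part t \<ge> 0" for t by (auto simp: pos_part_def)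
    have e1: "1 + a * v - b*q + c*(Y - B) - (a*y/q - b) \<ge> 0" using gy pp[of "a*y/q - b"] by linarith
    have e0: "1 + a * v - b*q - c*B \<ge> 0" "1 + a * v - b*q - c*B + b \<ge> 0"
      using g0 pp[of "-b"] by auto
    have comb: "q * (1 + a * v - b*q + c*(Y - B) - (a*y/q - b)) + p * (1 + a * v - b*q - c*B)
        = 1 + a*(v-y) + c*(q*Y - B)"
      using q(1) unfolding pq by (simp add: field_simps)
    have key: "1 + a*(v-y) + c*(q*Y - B) \<ge> 0"
      by (metis comb e1 e0(1) q(1) assms(1) mult_nonneg_nonneg add_nonneg_nonneg less_imp_le)
    have a0': "a \<ge> 0" "c \<ge> 0" using a0 c0 by (auto simp: a_def c_def)
    have n1: "c*(q*Y - B) \<le> 0" using a0' Y by (simp add: mult_nonneg_nonpos)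
    have n2: "a*(v-y) \<le> 0" using a0' assms by (simp add: mult_nonneg_nonpos)
    have t1: "a*(y-v) \<le> 1" using key n1 by (simp add: algebra_simps)
    have t2: "c*(B - q*Y) \<le> 1" using key n2 by (simp add: algebra_simps)
    have ab: "a \<le> 1/(y-v)" using t1 assms by (simp add: field_simps)
    have cb: "c \<le> 1/(B - q*Y)" using t2 Y by (simp add: field_simps)
    have comb2: "q * (1 + a * v - b*q + c*(Y - B) - (a*y/q - b)) + p * (1 + a * v - b*q - c*B + b)
        = 1 + a*(v-y) + c*(q*Y - B) + p*b"
      using q(1) unfolding pq by (simp add: field_simps)
    have "1 + a*(v-y) + c*(q*Y - B) + p*b \<ge> 0"
      by (metis comb2 e1 e0(2) q(1) assms(1) mult_nonneg_nonneg add_nonneg_nonneg less_imp_le)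
    then have "p*b \<ge> -1" using n1 n2 by linarith
    then have bl: "b \<ge> -1/p" using assms by (simp add: field_simps)
    have "a * v \<le> \<bar>v\<bar>/(y-v)"
    proof -
      have "a * v \<le> a*\<bar>v\<bar>" using a0' by (simp add: mult_left_mono)
      also have "\<dots> \<le> \<bar>v\<bar>/(y-v)" using ab by (metis abs_ge_zero mult.commute mult_left_mono times_divide_eq_right mult.right_neutral)
      finally show ?thesis .
    qed
    then have "b*q \<le> 1 + \<bar>v\<bar>/(y-v)" using e0(1) c0 c_def \<open>B > 0\<close> mult_nonneg_nonneg[of c B] by linarith
    then have bu: "b \<le> (1 + \<bar>v\<bar>/(y-v))/q" using q by (simp add: field_simps)
    have "norm lam \<le> \<bar>a\<bar> + \<bar>b\<bar> + \<bar>c\<bar>"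
      using norm_le_l1_cart[of lam] by (simp add: sum_3 a_def b_def c_def)
    also have "\<dots> \<le> R" 
    proof -
      have p1: "0 \<le> 1/p" using assms by simp
      have p2: "0 \<le> (1 + \<bar>v\<bar>/(y-v))/q" using q assms by simp
      have "\<bar>b\<bar> \<le> (1 + \<bar>v\<bar>/(y-v))/q + 1/p" using bu bl p1 p2 by linarith
      then show ?thesis unfolding R_def using ab cb a0' by linarith
    qed
    finally show "lam \<in> cball 0 R" by simp
  qed
  then show ?thesis using bounded_cball bounded_subset by blast
qed

theorem lemma17:
  fixes p eps B v :: real
  assumes "0 < p" "p < 1" "eps > 0" "B > 0"
    and "- (B powr (1 / (1 + eps))) \<le> v"
    and "v < B powr (1 / (1 + eps)) * (1 - p) powr (- 1 / (1 + eps))"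
  shows "compact (S_hat p eps B v)"
proof -
  define r where "r = 1 + eps"
  define q where "q = 1 - p"
  have r: "r > 0" using assms r_def by simp
  have q: "0 < q" "q < 1" using assms q_def by auto
  define x0 where "x0 = B powr (1/r)"
  define x1 where "x1 = x0 * q powr (-1/r)"
  have x0: "x0 > 0" using assms x0_def by simp
  have v1: "v < x1" using assms(6) by (simp add: x1_def x0_def r_def q_def)
  have v0: "-x0 \<le> v" using assms(5) by (simp add: x0_def r_def)
  have "q powr (1/r) \<le> 1" using q r by (intro powr_le1) auto
  moreover have "q powr (-1/r) = inverse (q powr (1/r))"
    by (metis minus_divide_left powr_minus)
  ultimately have "q powr (-1/r) \<ge> 1" using q
    by (simp add: one_le_inverse)
  then have "x0 \<le> x1" unfolding x1_def using x0
    by (metis mult.right_neutral mult_left_mono less_imp_le)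
  define y where "y = (v + x1)/2"
  have vy: "v < y" using v1 y_def by simp
  have ay: "\<bar>y\<bar> < x1" using v1 v0 \<open>x0 \<le> x1\<close> y_def by auto
  have "\<bar>y\<bar> powr r < x1 powr r" using ay r by (simp add: powr_less_mono2)
  also have "x1 powr r = B * q powr (-1)"
    unfolding x1_def x0_def using assms q r
    by (simp add: powr_mult powr_powr)
  also have "\<dots> = B / q" using q by (simp add: powr_neg_one divide_inverse)
  finally have "q * \<bar>y\<bar> powr r < B" using q by (simp add: field_simps)
  then have "(1-p) * (\<bar>y\<bar> powr (1 + eps)) < B" by (simp add: q_def r_def)
  then have "bounded (S_hat p eps B v)" using bd[OF assms(1,2,4) vy] by blast
  then show ?thesis using cl bounded_closed_imp_seq_compact compact_eq_seq_compact_metric by blast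
qed

end
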